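(* Let $f \colon \mathbb{R}^n \to \mathbb{R}$ be the Euclidean norm, $f(x) = \|x\|$. Then every BFGS sequence $(x_k)_{k \ge 0}$ for $f$ converges to $0$.
   Context: A sequence $(x_k)$ is a BFGS sequence for $f$ if $f$ is differentiable at each $x_k$ with $\nabla f(x_k) \neq 0$, and there exist parameters $0<\mu<\nu<1$ and a positive definite $n\times n$ matrix $H_0$ such that, with $s_k = x_{k+1}-x_k$, $y_k = \nabla f(x_{k+1}) - \nabla f(x_k)$, $V_k = I - \frac{s_k y_k^T}{s_k^T y_k}$ and $H_{k+1} = V_k H_k V_k^T + \frac{s_k s_k^T}{s_k^T y_k}$, one has for all $k=0,1,2,\dots$: $H_k \nabla f(x_k) \in -\mathbb{R}_+ s_k$, $f(x_{k+1}) \le f(x_k) + \mu \nabla f(x_k)^T s_k$, and $\nabla f(x_{k+1})^T s_k \ge \nu \nabla f(x_k)^T s_k$. *)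

theory Defs
  imports "HOL-Analysis.Analysis"
begin

definition outer :: "real^'n \<Rightarrow> real^'n \<Rightarrow> real^'n^'n" where
  "outer s y = (\<chi> i j. s $ i * y $ j)"

definition pos_def :: "real^'n^'n \<Rightarrow> bool" where
  "pos_def H \<longleftrightarrow> transpose H = H \<and> (\<forall>v. v \<noteq> 0 \<longrightarrow> v \<bullet> (H *v v) > 0)"

definition has_grad :: "(real^'n \<Rightarrow> real) \<Rightarrow> real^'n \<Rightarrow> real^'n \<Rightarrow> bool" where
  "has_grad f g x \<longleftrightarrow> (f has_derivative (\<lambda>h. g \<bullet> h)) (at x)"

definition bfgs_seq :: "(real^'n \<Rightarrow> real) \<Rightarrow> (nat \<Rightarrow> real^'n) \<Rightarrow> bool" where
  "bfgs_seq f x \<longleftrightarrow>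
    (\<exists>g :: nat \<Rightarrow> real^'n. (\<forall>k. has_grad f (g k) (x k) \<and> g k \<noteq> 0) \<and>
      (\<exists>(\<mu>::real) (\<nu>::real) (H :: nat \<Rightarrow> real^'n^'n).
         0 < \<mu> \<and> \<mu> < \<nu> \<and> \<nu> < 1 \<and> pos_def (H 0) \<and>
         (\<forall>k. let s = x (Suc k) - x k; y = g (Suc k) - g k;
                   V = mat 1 - (1 / (s \<bullet> y)) *\<^sub>R outer s y
               in H (Suc k) = V ** H k ** transpose V + (1 / (s \<bullet> y)) *\<^sub>R outer s s
                  \<and> (\<exists>t\<ge>0. H k *v g k = - (t *\<^sub>R s))
                  \<and> f (x (Suc k)) \<le> f (x k) + \<mu> * (g k \<bullet> s)
                  \<and> g (Suc k) \<bullet> s \<ge> \<nu> * (g k \<bullet> s))))"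

end

theory Submission
  imports Defs
begin


lemma det_id_row:
  fixes w :: "real^'n"
  shows "det ((\<chi> i. if i = p then w else axis i 1) :: real^'n^'n) = w $ p"
proof -
  define A :: "real^'n^'n" where "A = (\<chi> i. if i = p then (w$p) *s axis p 1 else axis i 1)"
  have dA: "det A = w $ p"
  proof -
    have "det A = w$p * det ((\<chi> i. if i = p then axis p 1 else axis i 1) :: real^'n^'n)"
      unfolding A_def by (rule det_row_mul)
    moreover have "((\<chi> i. if i = p then axis p 1 else axis i 1) :: real^'n^'n) = mat 1"
      by (simp add: vec_eq_iff mat_def axis_def)
    ultimately show ?thesis by simp
  qed
  define x where "x = (\<Sum>j\<in>UNIV - {p}. (w$j) *s (axis j 1 :: real^'n))"
  have xs: "x \<in> vec.span {row j A |j. j \<noteq> p}"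
    unfolding x_def
  proof (rule vec.span_sum)
    fix j assume "j \<in> UNIV - {p}"
    then have "axis j 1 \<in> {row j A |j. j \<noteq> p}"
      by (auto simp: A_def row_def intro!: exI[of _ j])
    then show "(w$j) *s axis j 1 \<in> vec.span {row j A |j. j \<noteq> p}"
      by (intro vec.span_scale vec.span_base)
  qed
  have wsplit: "w = (w$p) *s axis p 1 + x"
  proof -
    have "w = (\<Sum>j\<in>UNIV. (w$j) *s (axis j 1 :: real^'n))" by (simp add: basis_expansion)
    also have "\<dots> = (w$p) *s axis p 1 + x"
      unfolding x_def by (subst sum.remove[of UNIV p]) auto
    finally show ?thesis .
  qed
  have "((\<chi> i. if i = p then w else axis i 1) :: real^'n^'n) =
        (\<chi> k. if k = p then row p A + x else row k A)"
    by (subst (1) wsplit) (simp add: vec_eq_iff A_def row_def)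
  then show ?thesis using det_row_span[OF xs] dA by simp
qed

lemma outer_mult: "outer a b *v z = (b \<bullet> z) *\<^sub>R a"
  by (simp add: vec_eq_iff outer_def matrix_vector_mult_def inner_vec_def sum_distrib_left mult_ac)

lemma transpose_outer: "transpose (outer a b) = outer b a"
  by (simp add: vec_eq_iff outer_def transpose_def)

lemma trace_outer: "trace (outer a b) = a \<bullet> b"
  by (simp add: trace_def outer_def inner_vec_def)

lemma matrix_add_rdistrib': "((A::real^'n^'n) + B) ** C = A ** C + B ** C"
  by (simp add: matrix_matrix_mult_def vec_eq_iff sum.distrib algebra_simps)

lemma det_rank1_aux:
  fixes u v :: "real^'n"
  assumes "p \<notin> F"
  shows "det ((\<chi> i. if i = p then v else if i \<in> F then axis i 1 + u$i *s v else axis i 1) :: real^'n^'n) = v $ p"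
proof -
  define uF :: "real^'n" where "uF = (\<chi> i. if i \<in> F then u$i else 0)"
  define J :: "real^'n^'n" where "J = (\<chi> i. if i = p then v else axis i 1)"
  have fact: "((\<chi> i. if i = p then v else if i \<in> F then axis i 1 + u$i *s v else axis i 1) :: real^'n^'n)
     = (mat 1 + outer uF (axis p 1)) ** J"
    using assms
  proof -
    have o: "outer uF (axis p 1) ** J = (\<chi> i j. uF$i * J$p$j)"
      proof (simp add: vec_eq_iff outer_def matrix_matrix_mult_def, intro allI)
        fix i j
        have "(\<Sum>k\<in>UNIV. uF $ i * axis p 1 $ k * J $ k $ j) = (\<Sum>k\<in>UNIV. if k = p then uF $ i * J $ p $ j else 0)"
          by (rule sum.cong) (auto simp: axis_def)
        then show "(\<Sum>k\<in>UNIV. uF $ i * axis p 1 $ k * J $ k $ j) = uF $ i * J $ p $ j" by simp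
      qed
    show ?thesis
      unfolding matrix_add_rdistrib' matrix_mul_lid o
      using assms by (auto simp: vec_eq_iff J_def uF_def axis_def)
  qed
  have "det (mat 1 + outer uF (axis p 1)) = 1"
  proof -
    have "transpose (mat 1 + outer uF (axis p 1)) = (\<chi> i. if i = p then axis p 1 + uF else axis i 1)"
      by (auto simp: vec_eq_iff transpose_def outer_def mat_def axis_def)
    then have "det (mat 1 + outer uF (axis p 1)) = (axis p 1 + uF) $ p"
      by (metis det_transpose det_id_row)
    then show ?thesis using assms by (simp add: uF_def)
  qed
  moreover have "det J = v $ p" unfolding J_def by (rule det_id_row)
  ultimately show ?thesis unfolding fact det_mul by simp
qed

lemma det_rank1_F:
  fixes u v :: "real^'n"
  shows "det ((\<chi> i. if i \<in> F then axis i 1 + u$i *s v else axis i 1) :: real^'n^'n)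
          = 1 + (\<Sum>i\<in>F. u$i * v$i)"
proof (induction F rule: infinite_finite_induct)
  case (infinite A) then show ?case by simp
next
  case empty
  have "((\<chi> i. if i \<in> {} then axis i 1 + u$i *s v else axis i 1) :: real^'n^'n) = mat 1"
    by (simp add: vec_eq_iff mat_def axis_def)
  then show ?case by simp
next
  case (insert p F)
  define c where "c = (\<lambda>i. if i \<in> F then axis i 1 + u$i *s v else (axis i 1::real^'n))"
  have eq: "((\<chi> i. if i \<in> insert p F then axis i 1 + u$i *s v else axis i 1) :: real^'n^'n)
     = (\<chi> i. if i = p then (\<lambda>i. axis p 1) i + (\<lambda>i. u$p *s v) i else c i)"
    by (simp add: vec_eq_iff c_def)
  have e1: "((\<chi> i. if i = p then (\<lambda>i. axis p 1) i else c i) :: real^'n^'n) =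
     (\<chi> i. if i \<in> F then axis i 1 + u$i *s v else axis i 1)"
    using insert(2) by (simp add: vec_eq_iff c_def)
  have e2: "det ((\<chi> i. if i = p then (\<lambda>i. u$p *s v) i else c i) :: real^'n^'n) = u$p * v$p"
  proof -
    have "det ((\<chi> i. if i = p then (\<lambda>i. u$p *s v) i else c i) :: real^'n^'n)
       = u$p * det ((\<chi> i. if i = p then v else c i) :: real^'n^'n)"
      by (rule det_row_mul)
    also have "det ((\<chi> i. if i = p then v else c i) :: real^'n^'n) = v$p"
      unfolding c_def using det_rank1_aux[OF insert(2), of v u] by simp
    finally show ?thesis .
  qed
  show ?case
    unfolding eq det_row_add e1 e2 insert(3) using insert(1,2) by simp
qed

lemma det_rank1:
  fixes u v :: "real^'n"
  shows "det (mat 1 + outer u v) = 1 + u \<bullet> v"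
proof -
  have "mat 1 + outer u v = ((\<chi> i. if i \<in> UNIV then axis i 1 + u$i *s v else axis i 1) :: real^'n^'n)"
    by (simp add: vec_eq_iff mat_def axis_def outer_def)
  then show ?thesis using det_rank1_F[of UNIV u v] by (simp add: inner_vec_def)
qed

lemma mvs: "(A::real^'n^'n) *v (c *\<^sub>R v) = c *\<^sub>R (A *v v)"
  by (simp add: vec_eq_iff matrix_vector_mult_def sum_distrib_left mult_ac)

lemma coef_alg:
  fixes d sg Q b Y yz :: real
  assumes "d > 0" "sg > 0" "Q \<ge> 0" "Y = yz + b * (- d / sg + Q / (sg * (1 + 1/d * Q)))"
  shows "b / (sg * (1 + 1/d * Q)) + 1/d * Y = 1/d * yz"
proof -
  define K where "K = sg * (1 + 1/d * Q)"
  have K: "K > 0" using assms unfolding K_def by (simp add: add_pos_nonneg)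
  have kd: "K * d = sg * (d + Q)" unfolding K_def using assms(1) by (simp add: field_simps)
  have e1: "b / K + 1/d * Y = b / K + yz/d - b/sg + (b * Q) / (d * K)"
    unfolding assms(4) K_def[symmetric] using assms(1,2) by (simp add: field_simps)
  have e2: "b / K + (b * Q) / (d * K) = b * (d + Q) / (d * K)"
    using K assms(1) by (simp add: field_simps)
  have e3: "b * (d + Q) / (d * K) = b / sg" using kd K assms by (simp add: mult.commute)
  show ?thesis unfolding K_def[symmetric] using e1 e2 e3 by simp
qed
lemma dot_transpose: "(transpose A *v x) \<bullet> y = x \<bullet> ((A::real^'n^'n) *v y)"
  by (simp add: transpose_matrix_vector dot_lmul_matrix)

lemma sym_dot: "transpose A = A \<Longrightarrow> (A *v x) \<bullet> y = x \<bullet> ((A::real^'n^'n) *v y)"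
  by (metis dot_transpose)

lemma trace_scaleR: "trace (c *\<^sub>R (A::real^'n^'n)) = c * trace A"
  by (simp add: trace_def sum_distrib_left)

lemma transpose_mat1: "transpose (mat 1 :: real^'n^'n) = mat 1"
  by (simp add: transpose_mat)

lemma transpose_scaleR: "transpose (c *\<^sub>R (A::real^'n^'n)) = c *\<^sub>R transpose A"
  by (simp add: vec_eq_iff transpose_def)

lemma quad_axis: "(axis i a + axis j b) \<bullet> ((B::real^'n^'n) *v (axis i a + axis j b))
   = a * a * B$i$i + a * b * B$i$j + b * a * B$j$i + b * b * B$j$j"
proof -
  have ax: "axis k c \<bullet> (B *v axis l d) = c * d * B$k$l" for k l c d
  proof -
    have "axis l d = d *\<^sub>R axis l (1::real)" by (simp add: vec_eq_iff axis_def)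
    then have "B *v axis l d = d *\<^sub>R column l B" by (simp add: mvs matrix_vector_mult_basis)
    then show ?thesis by (simp add: inner_axis' column_def)
  qed
  show ?thesis by (simp add: inner_add_left matrix_vector_right_distrib inner_add_right ax)
qed

lemma pd_entries:
  fixes B :: "real^'n^'n"
  assumes sym: "transpose B = B" and pd: "\<forall>v. v \<noteq> 0 \<longrightarrow> v \<bullet> (B *v v) > 0"
  shows "\<And>i. B$i$i > 0" and "\<And>i j. \<bar>B$i$j\<bar> \<le> trace B" and "trace B > 0"
proof -
  have Bs: "B$j$i = B$i$j" for i j using sym by (metis transpose_def vec_lambda_beta)
  have diag: "B$i$i > 0" for i
  proof -
    have "axis i 1 \<noteq> (0::real^'n)" by (simp add: axis_eq_0_iff)
    then have "(axis i 1 + axis i 0) \<bullet> (B *v (axis i 1 + axis i 0)) > 0"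
      using pd by (simp add: axis_def vec_eq_iff)
    then show ?thesis unfolding quad_axis by simp
  qed
  then show "\<And>i. B$i$i > 0" .
  have dle: "B$i$i \<le> trace B" for i
    unfolding trace_def by (rule member_le_sum) (auto intro: less_imp_le diag)
  show "trace B > 0" using dle[of undefined] diag[of undefined] by linarith
  show "\<bar>B$i$j\<bar> \<le> trace B" for i j
  proof (cases "i = j")
    case True then show ?thesis using dle[of i] diag[of i] by simp
  next
    case False
    have p1: "(axis i 1 + axis j 1) \<bullet> (B *v (axis i 1 + axis j 1)) \<ge> 0"
      using pd by (cases "(axis i 1 + axis j 1) = (0::real^'n)") (auto intro: less_imp_le)
    have p2: "(axis i 1 + axis j (-1)) \<bullet> (B *v (axis i 1 + axis j (-1))) \<ge> 0"
      using pd by (cases "(axis i 1 + axis j (-1)) = (0::real^'n)") (auto intro: less_imp_le)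
    have "B$i$i + B$j$j = sum (\<lambda>k. B$k$k) {i, j}" using False by simp
    also have "\<dots> \<le> trace B" unfolding trace_def
      by (rule sum_mono2) (auto intro: less_imp_le diag)
    finally have "B$i$i + B$j$j \<le> trace B" .
    then show ?thesis using p1 p2 unfolding quad_axis Bs[of i j] by (simp add: abs_le_iff)
  qed
qed

lemma det_bound:
  fixes B :: "real^'n^'n"
  assumes sym: "transpose B = B" and pd: "\<forall>v. v \<noteq> 0 \<longrightarrow> v \<bullet> (B *v v) > 0"
  shows "\<bar>det B\<bar> \<le> real (card {p. p permutes (UNIV::'n set)}) * trace B ^ CARD('n)"
proof -
  note e = pd_entries[OF sym pd]
  have "\<bar>det B\<bar> \<le> (\<Sum>p\<in>{p. p permutes (UNIV::'n set)}. \<bar>of_int (sign p) * (\<Prod>i\<in>UNIV. B$i$p i)\<bar>)"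
    unfolding det_def by (rule sum_abs)
  also have "\<dots> \<le> (\<Sum>p\<in>{p. p permutes (UNIV::'n set)}. trace B ^ CARD('n))"
  proof (rule sum_mono)
    fix p :: "'n \<Rightarrow> 'n"
    have "\<bar>of_int (sign p) :: real\<bar> = 1" by (simp add: sign_def)
    moreover have "(\<Prod>i\<in>UNIV. \<bar>B$i$p i\<bar>) \<le> (\<Prod>i\<in>(UNIV::'n set). trace B)"
      by (rule prod_mono) (use e(2) in auto)
    ultimately show "\<bar>of_int (sign p) * (\<Prod>i\<in>UNIV. B$i$p i)\<bar> \<le> trace B ^ CARD('n)"
      by (simp add: abs_mult abs_prod)
  qed
  also have "\<dots> = real (card {p. p permutes (UNIV::'n set)}) * trace B ^ CARD('n)" by simp
  finally show ?thesis .
qed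


context
  fixes H B :: "real^'n^'n" and s y :: "real^'n"
  assumes Hsym: "transpose H = H"
    and Hpd: "\<forall>v. v \<noteq> 0 \<longrightarrow> v \<bullet> (H *v v) > 0"
    and HB: "H ** B = mat 1"
    and sy: "s \<bullet> y > 0"
begin

lemma BH: "B ** H = mat 1" using HB matrix_left_right_inverse1 by blast

lemma HBv: "H *v (B *v z) = z" by (simp add: matrix_vector_mul_assoc HB)
lemma BHv: "B *v (H *v z) = z" by (simp add: matrix_vector_mul_assoc BH)

lemma Bsym: "transpose B = B"
proof -
  have "transpose B = transpose B ** (H ** B)" by (simp add: HB)
  also have "\<dots> = transpose (H ** B) ** B"
    by (simp add: matrix_mul_assoc matrix_transpose_mul Hsym)
  finally show ?thesis by (simp add: HB transpose_mat1)
qed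

lemma s_ne: "s \<noteq> 0" using sy by auto

lemma sigma_pos: "s \<bullet> (B *v s) > 0"
proof -
  have "B *v s \<noteq> 0" using s_ne HBv[of s] by auto
  then have "(B *v s) \<bullet> (H *v (B *v s)) > 0" using Hpd by blast
  then show ?thesis by (simp add: HBv inner_commute)
qed

lemma yHy_nonneg: "y \<bullet> (H *v y) \<ge> 0"
  using Hpd by (cases "y = 0") (auto intro: less_imp_le)

abbreviation "rho \<equiv> 1 / (s \<bullet> y)"
abbreviation "VV \<equiv> mat 1 - rho *\<^sub>R outer s y"
abbreviation "HH \<equiv> VV ** H ** transpose VV + rho *\<^sub>R outer s s"

lemma rho_pos: "rho > 0" using sy by simp

lemma V_vec: "VV *v w = w - (rho * (y \<bullet> w)) *\<^sub>R s"
  by (simp add: matrix_vector_mult_diff_rdistrib outer_mult scaleR_matrix_vector_assoc[symmetric])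

lemma Vt_vec: "transpose VV *v w = w - (rho * (s \<bullet> w)) *\<^sub>R y"
proof -
  have "transpose VV = mat 1 - rho *\<^sub>R outer y s"
    by (simp add: vec_eq_iff transpose_def mat_def outer_def mult.commute)
  then show ?thesis
    by (simp add: matrix_vector_mult_diff_rdistrib outer_mult scaleR_matrix_vector_assoc[symmetric])
qed

lemma HH_vec: "HH *v w = VV *v (H *v (transpose VV *v w)) + (rho * (s \<bullet> w)) *\<^sub>R s"
  by (simp add: matrix_vector_mult_add_rdistrib matrix_vector_mul_assoc[symmetric] outer_mult
      scaleR_matrix_vector_assoc[symmetric])

lemma HH_sym: "transpose HH = HH"
proof -
  have "transpose (rho *\<^sub>R outer s s) = rho *\<^sub>R outer s s"
    by (simp add: transpose_scaleR transpose_outer)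
  moreover have "transpose (VV ** H ** transpose VV) = VV ** H ** transpose VV"
    by (simp add: matrix_transpose_mul Hsym matrix_mul_assoc)
  ultimately show ?thesis by (simp add: transpose_def vec_eq_iff)
qed

lemma HH_pd: "\<forall>v. v \<noteq> 0 \<longrightarrow> v \<bullet> (HH *v v) > 0"
proof (intro allI impI)
  fix v :: "real^'n" assume v: "v \<noteq> 0"
  define w where "w = transpose VV *v v"
  have eq: "v \<bullet> (HH *v v) = w \<bullet> (H *v w) + rho * (s \<bullet> v)^2"
    unfolding HH_vec w_def
    by (simp add: inner_add_right dot_lmul_matrix power2_eq_square inner_commute)
  show "v \<bullet> (HH *v v) > 0"
  proof (cases "s \<bullet> v = 0")
    case True
    then have "w = v" unfolding w_def Vt_vec by simp
    then have "w \<bullet> (H *v w) > 0" using Hpd v by simp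
    then show ?thesis using eq True by simp
  next
    case False
    have "w \<bullet> (H *v w) \<ge> 0" using Hpd by (cases "w = 0") (auto intro: less_imp_le)
    moreover have "rho * (s \<bullet> v)^2 > 0" using False rho_pos by simp
    ultimately show ?thesis using eq by linarith
  qed
qed

abbreviation "sig \<equiv> s \<bullet> (B *v s)"
abbreviation "BB \<equiv> B - (1 / sig) *\<^sub>R outer (B *v s) (B *v s) + rho *\<^sub>R outer y y"

lemma sBz: "s \<bullet> (B *v z) = (B *v s) \<bullet> z"
  using sym_dot[OF Bsym] by simp

lemma BB_vec: "BB *v z = B *v z - (((B *v s) \<bullet> z) / sig) *\<^sub>R (B *v s) + (rho * (y \<bullet> z)) *\<^sub>R y"
  by (simp add: matrix_vector_mult_add_rdistrib matrix_vector_mult_diff_rdistrib outer_mult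
      scaleR_matrix_vector_assoc[symmetric])

lemma HH_BB: "HH ** BB = mat 1"
proof -
  have "HH *v (BB *v z) = z" for z
  proof -
    define c where "c = ((B *v s) \<bullet> z) / sig"
    define w where "w = BB *v z"
    have sp: "sig > 0" by (rule sigma_pos)
    have sw: "s \<bullet> w = y \<bullet> z"
    proof -
      have "s \<bullet> w = (B *v s) \<bullet> z - c * sig + rho * (y \<bullet> z) * (s \<bullet> y)"
        unfolding w_def BB_vec c_def by (simp add: inner_diff_right inner_add_right sBz)
      also have "\<dots> = y \<bullet> z" using sp sy by (simp add: c_def)
      finally show ?thesis .
    qed
    have t1: "transpose VV *v w = B *v z - c *\<^sub>R (B *v s)"
      unfolding Vt_vec sw unfolding w_def BB_vec c_def by simp
    have t2: "H *v (transpose VV *v w) = z - c *\<^sub>R s"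
      unfolding t1 by (simp add: matrix_vector_mult_diff_distrib mvs HBv)
    have t3: "VV *v (H *v (transpose VV *v w)) = z - (rho * (y \<bullet> z)) *\<^sub>R s"
    proof -
      have "rho * (y \<bullet> (z - c *\<^sub>R s)) = rho * (y \<bullet> z) - c"
        using sy by (simp add: inner_diff_right field_simps inner_commute)
      then show ?thesis unfolding t2 V_vec by (simp add: algebra_simps)
    qed
    have "HH *v w = VV *v (H *v (transpose VV *v w)) + (rho * (s \<bullet> w)) *\<^sub>R s"
      by (rule HH_vec)
    then have "HH *v w = z" unfolding t3 sw by simp
    then show ?thesis by (simp only: w_def)
  qed
  then show ?thesis by (simp add: matrix_eq matrix_vector_mul_assoc[symmetric])
qed

lemma trace_BB: "trace BB = trace B - ((B *v s) \<bullet> (B *v s)) / sig + rho * (y \<bullet> y)"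
  by (simp add: trace_add trace_sub trace_scaleR trace_outer)

lemma det_BB: "det BB = det B * (s \<bullet> y) / sig"
proof -
  define beta where "beta = 1 + rho * (y \<bullet> (H *v y))"
  define u2 where "u2 = rho *\<^sub>R (H *v y)"
  define w where "w = (- (1 / sig)) *\<^sub>R s + (1 / (sig * beta)) *\<^sub>R (H *v y)"
  have sp: "sig > 0" by (rule sigma_pos)
  have bp: "beta > 0" unfolding beta_def using rho_pos yHy_nonneg
    by (metis add_pos_nonneg mult_nonneg_nonneg less_imp_le zero_less_one)
  have HyBs: "(H *v y) \<bullet> (B *v s) = y \<bullet> s"
    using sym_dot[OF Hsym, of y "B *v s"] by (simp add: HBv)
  have fact: "BB = B ** (mat 1 + outer u2 y) ** (mat 1 + outer w (B *v s))"
  proof -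
    have "BB *v z = (B ** (mat 1 + outer u2 y) ** (mat 1 + outer w (B *v s))) *v z" for z
    proof -
      define z' where "z' = z + ((B *v s) \<bullet> z) *\<^sub>R w"
      define coef where "coef = ((B *v s) \<bullet> z) / (sig * beta) + rho * (y \<bullet> z')"
      have r1: "(B ** (mat 1 + outer u2 y) ** (mat 1 + outer w (B *v s))) *v z
            = B *v z - (((B *v s) \<bullet> z) / sig) *\<^sub>R (B *v s) + coef *\<^sub>R y"
      proof -
        have a: "(mat 1 + outer w (B *v s)) *v z = z'"
          by (simp add: matrix_vector_mult_add_rdistrib outer_mult z'_def)
        have b: "(mat 1 + outer u2 y) *v z' = z' + (y \<bullet> z') *\<^sub>R u2"
          by (simp add: matrix_vector_mult_add_rdistrib outer_mult)
        have Bw: "B *v w = (- (1 / sig)) *\<^sub>R (B *v s) + (1 / (sig * beta)) *\<^sub>R y"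
          by (simp add: w_def matrix_vector_right_distrib matrix_vector_mult_diff_distrib mvs BHv)
        have c: "B *v (z' + (y \<bullet> z') *\<^sub>R u2) = B *v z + ((B *v s) \<bullet> z) *\<^sub>R (B *v w) + (rho * (y \<bullet> z')) *\<^sub>R y"
          by (simp add: z'_def u2_def matrix_vector_right_distrib mvs BHv)
        show ?thesis
          unfolding matrix_vector_mul_assoc[symmetric] a b c Bw coef_def
          by (simp add: algebra_simps)
      qed
      have "coef = rho * (y \<bullet> z)"
      proof -
        have yw: "y \<bullet> w = - (s \<bullet> y) / sig + (y \<bullet> (H *v y)) / (sig * (1 + 1 / (s \<bullet> y) * (y \<bullet> (H *v y))))"
          unfolding w_def beta_def by (simp add: inner_add_right inner_diff_right inner_commute)
        have Y: "y \<bullet> z' = y \<bullet> z + ((B *v s) \<bullet> z) * (- (s \<bullet> y) / sig + (y \<bullet> (H *v y)) / (sig * (1 + 1 / (s \<bullet> y) * (y \<bullet> (H *v y)))))"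
          unfolding z'_def inner_add_right inner_scaleR_right yw by simp
        show ?thesis
          unfolding coef_def beta_def using coef_alg[OF sy sp yHy_nonneg Y] by simp
      qed
      then show ?thesis unfolding r1 BB_vec by simp
    qed
    then show ?thesis by (simp add: matrix_eq)
  qed
  have d1: "det (mat 1 + outer u2 y) = beta"
    unfolding det_rank1 u2_def beta_def by (simp add: inner_commute)
  have d2: "det (mat 1 + outer w (B *v s)) = (s \<bullet> y) / (sig * beta)"
  proof -
    have "w \<bullet> (B *v s) = - 1 + (s \<bullet> y) / (sig * beta)"
    proof -
      have "w \<bullet> (B *v s) = (- (1 / sig)) * sig + (1 / (sig * beta)) * ((H *v y) \<bullet> (B *v s))"
        unfolding w_def by (simp only: inner_add_left inner_scaleR_left)
      then show ?thesis using sp unfolding HyBs by (simp add: inner_commute)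
    qed
    then show ?thesis unfolding det_rank1 by simp
  qed
  show ?thesis unfolding fact det_mul d1 d2 using bp sp by (simp add: field_simps)
qed

end

lemma scalar_facts:
  fixes L a a' e A0 \<nu> gs ys ss yy :: real
  assumes L: "0 < L" "L \<le> a'" "a' \<le> a" "a \<le> A0"
    and nu: "0 < \<nu>" "\<nu> < 1"
    and gs: "gs = a' * (1 - e) - a" "gs < 0"
    and ys: "ys = (a + a') * e" "ys \<ge> (1 - \<nu>) * (- gs)"
    and ss: "ss = (a - a')^2 + 2 * a * a' * e"
    and yy: "yy = 2 * e"
  shows "e > 0" "yy / ys \<le> 1 / L" "ss \<le> A0 * (1 / (1 - \<nu>) + 1) * ys"
    "gs^2 \<le> ss * (- gs) / (L * (1 - \<nu>))" "ss > 0"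
proof -
  have "(1 - \<nu>) * (- gs) > 0" using gs(2) nu by (intro mult_pos_pos) auto
  then have ysp: "ys > 0" using ys(2) by linarith
  have apos: "a > 0" "a' > 0" using L by auto
  show ep: "e > 0" using ysp unfolding ys(1) using apos
    by (metis add_pos_pos zero_less_mult_pos)
  show "yy / ys \<le> 1 / L"
  proof -
    have "yy / ys = (2 * e) / ((a + a') * e)" unfolding yy ys(1) ..
    also have "\<dots> = 2 / (a + a')" using ep by simp
    also have "\<dots> \<le> 1 / L" using L by (simp add: field_simps)
    finally show ?thesis .
  qed
  have "a' * e \<ge> 0" using ep apos by simp
  moreover have "gs = a' - a' * e - a" unfolding gs(1) by (simp add: algebra_simps)
  ultimately have d1: "a - a' \<le> - gs" by linarith
  have d2: "- gs \<le> ys / (1 - \<nu>)" using ys(2) nu by (simp add: field_simps mult.commute)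
  have d0: "0 \<le> a - a'" using L by simp
  have sq: "(a - a')^2 \<le> A0 * ys / (1 - \<nu>)"
  proof -
    have "(a - a')^2 = (a - a') * (a - a')" by (simp add: power2_eq_square)
    also have "\<dots> \<le> A0 * (ys / (1 - \<nu>))"
      by (rule mult_mono) (use d0 d1 d2 L apos in auto)
    finally show ?thesis by simp
  qed
  have pr: "2 * a * a' * e \<le> A0 * ys"
  proof -
    have "2 * a * a' \<le> a * (a + a')" using L apos by (simp add: algebra_simps)
    then have "2 * a * a' * e \<le> a * (a + a') * e" using ep by (simp add: mult_right_mono)
    also have "\<dots> \<le> A0 * ((a + a') * e)" using L ep apos
      by (simp add: mult.assoc mult_right_mono)
    finally show ?thesis unfolding ys(1) .
  qed
  show "ss \<le> A0 * (1 / (1 - \<nu>) + 1) * ys"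
    using sq pr unfolding ss by (simp add: algebra_simps)
  have "L * ys \<le> 2 * a * a' * e"
  proof -
    have "L * (a + a') \<le> 2 * a * a'"
    proof -
      have "L * a \<le> a' * a" using L apos by (simp add: mult_right_mono)
      moreover have "L * a' \<le> a * a'" using L apos by (simp add: mult_right_mono)
      ultimately show ?thesis by (simp add: algebra_simps)
    qed
    then show ?thesis unfolding ys(1) using ep
      by (metis mult.assoc mult_right_mono less_imp_le)
  qed
  moreover have "(a - a')^2 \<ge> 0" by simp
  ultimately have Lys: "L * ys \<le> ss" unfolding ss by linarith
  have "L * ys > 0" using ysp L by simp
  then show "ss > 0" using Lys by linarith
  have "ys \<le> ss / L" using Lys L by (simp add: field_simps mult.commute)
  then have "(1 - \<nu>) * (- gs) \<le> ss / L" using ys(2) by linarith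
  then have "- gs \<le> ss / (L * (1 - \<nu>))" using nu L by (simp add: field_simps)
  then have "(- gs) * (- gs) \<le> (- gs) * (ss / (L * (1 - \<nu>)))"
    by (rule mult_left_mono) (use gs(2) in auto)
  then show "gs^2 \<le> ss * (- gs) / (L * (1 - \<nu>))" by (simp add: power2_eq_square mult.commute)
qed

lemma potential_step:
  fixes T T' D D' r M Mb ys sig gs ss c1 :: real
  assumes "T' = T - r + M" "D' = D * ys / sig" "D > 0" "sig > 0" "ys > 0"
    "r * gs^2 = sig" "gs \<noteq> 0" "ss \<le> c1 * ys" "ss > 0" "M \<le> Mb"
  shows "ln (ss / gs^2) \<le> ln c1 + Mb - 1 + (T - ln D) - (T' - ln D')"
proof -
  have g2: "gs^2 > 0" using assms(7) by simp
  have rp: "r > 0" using assms(4,6) g2 by (metis zero_less_mult_pos2)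
  have c1: "c1 > 0"
  proof (rule ccontr)
    assume "\<not> c1 > 0"
    then have "c1 * ys \<le> 0" using assms(5) by (simp add: mult_nonpos_nonneg)
    then show False using assms(8,9) by linarith
  qed
  have "ln ss \<le> ln (c1 * ys)" using assms(5,8,9) c1 by simp
  then have l1: "ln ss \<le> ln c1 + ln ys" using c1 assms(5) by (simp add: ln_mult)
  have "gs^2 = sig / r" using assms(6) rp by (simp add: field_simps)
  then have l2: "ln (gs^2) = ln sig - ln r" using rp assms(4) by (simp add: ln_div)
  have l3: "ln D' = ln D + ln ys - ln sig" using assms(2,3,4,5) by (simp add: ln_div ln_mult)
  have l4: "ln r \<le> r - 1" using rp by (rule ln_le_minus_one)
  have "ln (ss / gs^2) = ln ss - ln (gs^2)" using assms(9) g2 by (simp add: ln_div)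
  then show ?thesis using l1 l2 l3 l4 assms(1,10) by linarith
qed

lemma potential_lower:
  fixes T D K :: real and n :: nat
  assumes "T > 0" "D > 0" "D \<le> K * T ^ n" "n \<ge> 1"
  shows "T - ln D \<ge> - (ln K + n * ln n - n)"
proof -
  have K: "K > 0"
  proof (rule ccontr)
    assume "\<not> K > 0"
    then have "K * T ^ n \<le> 0" using assms(1) by (simp add: mult_nonpos_nonneg)
    then show False using assms(2,3) by linarith
  qed
  have "ln D \<le> ln (K * T ^ n)" using assms K by simp
  also have "\<dots> = ln K + n * ln T" using K assms(1) by (simp add: ln_mult ln_realpow)
  finally have "ln D \<le> ln K + n * ln T" .
  moreover have "ln T - ln n \<le> T / n - 1"
  proof -
    have "ln (T / n) \<le> T / n - 1" using assms by (intro ln_le_minus_one) simp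
    then show ?thesis using assms by (simp add: ln_div)
  qed
  then have "n * (ln T - ln n) \<le> n * (T / n - 1)"
    by (intro mult_left_mono) auto
  then have "n * ln T \<le> T + n * ln n - n" using assms
    by (simp add: algebra_simps)
  ultimately show ?thesis by linarith
qed

lemma grad_norm:
  fixes g x :: "real^'n"
  assumes "((\<lambda>z. norm z) has_derivative (\<lambda>h. g \<bullet> h)) (at x)" "g \<noteq> 0"
  shows "x \<noteq> 0" "g = x /\<^sub>R norm x"
proof -
  show x: "x \<noteq> 0"
  proof
    assume x0: "x = 0"
    have "\<forall>\<^sub>F z in at x. norm x \<le> norm z" using x0 by simp
    then have "(\<lambda>h. g \<bullet> h) = (\<lambda>h. 0)" using has_derivative_local_min[OF assms(1)] by blast
    then have "g \<bullet> g = 0" by metis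
    then show False using assms(2) by simp
  qed
  have "(\<lambda>h. g \<bullet> h) = (\<lambda>h. h \<bullet> sgn x)"
    using has_derivative_unique[OF assms(1) has_derivative_norm[OF x]] by simp
  then have "g \<bullet> (g - sgn x) = (g - sgn x) \<bullet> sgn x" by metis
  then have "(g - sgn x) \<bullet> (g - sgn x) = 0"
    by (simp add: inner_diff_left inner_diff_right inner_commute)
  then show "g = x /\<^sub>R norm x" by (simp add: sgn_div_norm)
qed

lemma pd_inv:
  fixes H :: "real^'n^'n"
  assumes pd: "\<forall>v. v \<noteq> 0 \<longrightarrow> v \<bullet> (H *v v) > 0"
  shows "H ** matrix_inv H = mat 1" "matrix_inv H ** H = mat 1"
proof -
  have "inj ((*v) H)"
  proof (rule injI)
    fix v w assume "H *v v = H *v w"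
    then have "H *v (v - w) = 0" by (simp add: matrix_vector_mult_diff_distrib)
    then show "v = w" using pd[rule_format, of "v - w"] by auto
  qed
  then have "det (matrix ((*v) H)) \<noteq> 0" using det_nz_iff_inj[of "(*v) H"] by (simp add: matrix_vector_mul_linear)
  then have "invertible H" by (simp add: invertible_det_nz matrix_of_matrix_vector_mul)
  then have "\<exists>A'. H ** A' = mat 1 \<and> A' ** H = mat 1" by (simp add: invertible_def)
  then have "H ** matrix_inv H = mat 1 \<and> matrix_inv H ** H = mat 1"
    unfolding matrix_inv_def by (rule someI_ex)
  then show "H ** matrix_inv H = mat 1" "matrix_inv H ** H = mat 1" by auto
qed

lemma descent:
  fixes H :: "real^'n^'n"
  assumes pd: "\<forall>v. v \<noteq> 0 \<longrightarrow> v \<bullet> (H *v v) > 0" and "H *v g = - (t *\<^sub>R s)" "t \<ge> 0" "g \<noteq> 0"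
  shows "g \<bullet> s < 0" "t > 0"
proof -
  have "g \<bullet> (H *v g) > 0" using pd assms(4) by blast
  then have p: "- t * (g \<bullet> s) > 0" using assms(2) by simp
  then show "t > 0" using assms(3) by (cases "t = 0") auto
  then show "g \<bullet> s < 0" using p by (simp add: mult_less_0_iff zero_less_mult_iff)
qed




lemma vec_ids:
  fixes x x' :: "real^'n"
  assumes "x \<noteq> 0" "x' \<noteq> 0"
  defines "e \<equiv> 1 - (x \<bullet> x') / (norm x * norm x')"
  shows "(x /\<^sub>R norm x) \<bullet> (x' - x) = norm x' * (1 - e) - norm x"
    "(x' - x) \<bullet> (x' /\<^sub>R norm x' - x /\<^sub>R norm x) = (norm x + norm x') * e"
    "(x' - x) \<bullet> (x' - x) = (norm x - norm x')^2 + 2 * norm x * norm x' * e"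
    "(x' /\<^sub>R norm x' - x /\<^sub>R norm x) \<bullet> (x' /\<^sub>R norm x' - x /\<^sub>R norm x) = 2 * e"
proof -
  have n: "norm x > 0" "norm x' > 0" using assms by auto
  have xx: "x \<bullet> x = norm x ^ 2" "x' \<bullet> x' = norm x' ^ 2" by (simp_all add: power2_norm_eq_inner)
  show "(x /\<^sub>R norm x) \<bullet> (x' - x) = norm x' * (1 - e) - norm x"
    unfolding e_def using n by (simp add: inner_diff_right xx field_simps power2_eq_square)
  show "(x' - x) \<bullet> (x' /\<^sub>R norm x' - x /\<^sub>R norm x) = (norm x + norm x') * e"
    unfolding e_def using n by (simp add: inner_diff_right inner_diff_left xx field_simps power2_eq_square inner_commute)
  show "(x' - x) \<bullet> (x' - x) = (norm x - norm x')^2 + 2 * norm x * norm x' * e"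
    unfolding e_def using n by (simp add: inner_diff_right inner_diff_left xx field_simps power2_eq_square inner_commute)
  show "(x' /\<^sub>R norm x' - x /\<^sub>R norm x) \<bullet> (x' /\<^sub>R norm x' - x /\<^sub>R norm x) = 2 * e"
    unfolding e_def using n by (simp add: inner_diff_right inner_diff_left xx field_simps power2_eq_square inner_commute)
qed

theorem corollary4p2:
  fixes x :: "nat \<Rightarrow> real^'n"
  assumes "bfgs_seq (\<lambda>z. norm z) x"
  shows "x \<longlonglongrightarrow> 0"
proof -
  obtain g \<mu> \<nu> H where
    gk: "\<forall>k. has_grad (\<lambda>z. norm z) (g k) (x k) \<and> g k \<noteq> 0"
    and par: "0 < \<mu>" "\<mu> < \<nu>" "\<nu> < 1" and H0: "pos_def (H 0)"
    and st: "\<forall>k. let s = x (Suc k) - x k; y = g (Suc k) - g k;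
                   V = mat 1 - (1 / (s \<bullet> y)) *\<^sub>R outer s y
               in H (Suc k) = V ** H k ** transpose V + (1 / (s \<bullet> y)) *\<^sub>R outer s s
                  \<and> (\<exists>t\<ge>0. H k *v g k = - (t *\<^sub>R s))
                  \<and> norm (x (Suc k)) \<le> norm (x k) + \<mu> * (g k \<bullet> s)
                  \<and> g (Suc k) \<bullet> s \<ge> \<nu> * (g k \<bullet> s)"
    using assms unfolding bfgs_seq_def by auto
  define s where "s k = x (Suc k) - x k" for k
  define y where "y k = g (Suc k) - g k" for k
  have stk: "H (Suc k) = (mat 1 - (1 / (s k \<bullet> y k)) *\<^sub>R outer (s k) (y k)) ** H k **
         transpose (mat 1 - (1 / (s k \<bullet> y k)) *\<^sub>R outer (s k) (y k))
         + (1 / (s k \<bullet> y k)) *\<^sub>R outer (s k) (s k)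
      \<and> (\<exists>t\<ge>0. H k *v g k = - (t *\<^sub>R s k))
      \<and> norm (x (Suc k)) \<le> norm (x k) + \<mu> * (g k \<bullet> s k)
      \<and> g (Suc k) \<bullet> s k \<ge> \<nu> * (g k \<bullet> s k)" for k
    using st unfolding Let_def s_def y_def by blast
  have Hs: "H (Suc k) = HH (H k) (s k) (y k)" for k using stk[of k] by blast
  have tk: "\<exists>t\<ge>0. H k *v g k = - (t *\<^sub>R s k)" for k using stk[of k] by blast
  have arm: "norm (x (Suc k)) \<le> norm (x k) + \<mu> * (g k \<bullet> s k)" for k using stk[of k] by blast
  have wol: "g (Suc k) \<bullet> s k \<ge> \<nu> * (g k \<bullet> s k)" for k using stk[of k] by blast
  have xg: "x k \<noteq> 0" "g k = x k /\<^sub>R norm (x k)" for k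
    using grad_norm[of "g k" "x k", OF gk[rule_format, of k, THEN conjunct1, unfolded has_grad_def]]
      gk[rule_format, of k] by auto
  have gnz: "g k \<noteq> 0" for k using gk by blast
  have dc: "g k \<bullet> s k < 0 \<and> s k \<bullet> y k > 0" if pd: "\<forall>v. v \<noteq> 0 \<longrightarrow> v \<bullet> (H k *v v) > 0" for k
  proof -
    obtain t where t: "t \<ge> 0" "H k *v g k = - (t *\<^sub>R s k)" using tk[of k] by blast
    have gs: "g k \<bullet> s k < 0" using descent(1)[OF pd t(2) t(1) gnz] .
    have "s k \<bullet> y k = g (Suc k) \<bullet> s k - g k \<bullet> s k"
      unfolding y_def by (simp add: inner_diff_right inner_commute)
    also have "\<dots> \<ge> (\<nu> - 1) * (g k \<bullet> s k)" using wol[of k] by (simp add: algebra_simps)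
    finally have "s k \<bullet> y k \<ge> (\<nu> - 1) * (g k \<bullet> s k)" .
    moreover have "(\<nu> - 1) * (g k \<bullet> s k) > 0" using gs par by (simp add: mult_neg_neg)
    ultimately show ?thesis using gs by linarith
  qed
  have inv: "transpose (H k) = H k \<and> (\<forall>v. v \<noteq> 0 \<longrightarrow> v \<bullet> (H k *v v) > 0)" for k
  proof (induction k)
    case 0 then show ?case using H0 unfolding pos_def_def by simp
  next
    case (Suc k)
    have sy: "s k \<bullet> y k > 0" using dc Suc by blast
    note HB = pd_inv(1)[of "H k"]
    show ?case unfolding Hs
      using HH_sym[OF _ _ HB sy] HH_pd[OF _ _ HB sy] Suc by blast
  qed
  have Hsym: "transpose (H k) = H k" for k using inv by blast
  have Hpd: "\<forall>v. v \<noteq> 0 \<longrightarrow> v \<bullet> (H k *v v) > 0" for k using inv by blast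
  have gs_neg: "g k \<bullet> s k < 0" for k using dc Hpd by blast
  have sy_pos: "s k \<bullet> y k > 0" for k using dc Hpd by blast
  define B where "B k = matrix_inv (H k)" for k
  have HB: "H k ** B k = mat 1" for k unfolding B_def using pd_inv(1) Hpd by blast
  have BH: "B k ** H k = mat 1" for k unfolding B_def using pd_inv(2) Hpd by blast
  note ctx = Hsym Hpd HB sy_pos
  have BSuc: "B (Suc k) = BB (B k) (s k) (y k)" for k
  proof -
    have "H (Suc k) ** BB (B k) (s k) (y k) = mat 1" unfolding Hs by (rule HH_BB[OF ctx])
    then have "B (Suc k) ** (H (Suc k) ** BB (B k) (s k) (y k)) = B (Suc k)" by simp
    then show ?thesis by (simp add: matrix_mul_assoc BH)
  qed
  have Bsym: "transpose (B k) = B k" for k by (rule Bsym[OF ctx])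
  have Bpd: "\<forall>v. v \<noteq> 0 \<longrightarrow> v \<bullet> (B k *v v) > 0" for k
  proof (intro allI impI)
    fix v :: "real^'n" assume v: "v \<noteq> 0"
    define w where "w = B k *v v"
    have Hw: "H k *v w = v" unfolding w_def by (simp add: matrix_vector_mul_assoc HB)
    then have "w \<noteq> 0" using v by auto
    then have "w \<bullet> (H k *v w) > 0" using Hpd by blast
    then show "v \<bullet> (B k *v v) > 0" using Hw by (simp add: w_def[symmetric] inner_commute)
  qed
  define sg where "sg k = s k \<bullet> (B k *v s k)" for k
  have sg_pos: "sg k > 0" for k unfolding sg_def by (rule sigma_pos[OF ctx])
  define T where "T k = trace (B k)" for k
  define D where "D k = \<bar>det (B k)\<bar>" for k
  define r where "r k = (B k *v s k) \<bullet> (B k *v s k) / sg k" for k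
  define M where "M k = 1 / (s k \<bullet> y k) * (y k \<bullet> y k)" for k
  have Tsuc: "T (Suc k) = T k - r k + M k" for k
    unfolding T_def BSuc trace_BB[OF ctx] r_def M_def sg_def ..
  have Dsuc: "D (Suc k) = D k * (s k \<bullet> y k) / sg k" for k
  proof -
    have "det (B (Suc k)) = det (B k) * (s k \<bullet> y k) / sg k"
      unfolding BSuc det_BB[OF ctx] sg_def ..
    then show ?thesis unfolding D_def using sy_pos[of k] sg_pos[of k]
      by (simp add: abs_mult abs_divide)
  qed
  have Dpos: "D k > 0" for k
  proof -
    have "det (H k) * det (B k) = 1" using HB[of k] by (metis det_mul det_I)
    then show ?thesis unfolding D_def by auto
  qed
  have rgs: "r k * (g k \<bullet> s k)^2 = sg k" for k
  proof -
    obtain t where t: "t \<ge> 0" "H k *v g k = - (t *\<^sub>R s k)" using tk[of k] by blast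
    have tp: "t > 0" using descent(2)[OF Hpd t(2) t(1) gnz] .
    have "g k = B k *v (H k *v g k)" by (simp add: matrix_vector_mul_assoc BH)
    also have "\<dots> = - (t *\<^sub>R (B k *v s k))" unfolding t(2) scaleR_minus_left[symmetric] mvs by simp
    finally have gB: "g k = - (t *\<^sub>R (B k *v s k))" .
    have gg: "g k \<bullet> g k = 1" using xg[of k] by (simp add: power2_norm_eq_inner[symmetric] divide_inverse)
    have bb: "(B k *v s k) \<bullet> (B k *v s k) = 1 / t^2"
      using gg unfolding gB using tp by (simp add: power2_eq_square field_simps)
    have gs: "g k \<bullet> s k = - t * sg k"
      unfolding gB sg_def by (simp add: inner_commute)
    show ?thesis unfolding r_def bb gs using tp sg_pos[of k] by (simp add: power2_eq_square field_simps)
  qed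

  define a where "a k = norm (x k)" for k
  have apos: "a k > 0" for k unfolding a_def using xg by simp
  have adec: "a (Suc k) \<le> a k" for k
    using arm[of k] gs_neg[of k] par(1) unfolding a_def
    by (smt (verit) mult_pos_neg)
  have adecseq: "decseq a" using adec by (simp add: decseq_SucI)
  obtain L where aL: "a \<longlonglongrightarrow> L" and Lle: "\<forall>i. L \<le> a i"
    using decseq_convergent[OF adecseq, of 0] apos less_imp_le by blast
  have L0: "L \<ge> 0" using aL apos by (metis LIMSEQ_le_const less_imp_le)
  show ?thesis
  proof (cases "L = 0")
    case True
    then have "(\<lambda>k. norm (x k)) \<longlonglongrightarrow> 0" using aL unfolding a_def by simp
    then show ?thesis by (simp add: tendsto_norm_zero_iff)
  next
    case False
    then have Lp: "L > 0" using L0 by simp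
    have False
    proof -
    have a0: "a k \<le> a 0" for k
      by (induction k) (auto intro: order_trans[OF adec])
    define c1 where "c1 = a 0 * (1 / (1 - \<nu>) + 1)"
    define C2 where "C2 = ln c1 + 1 / L - 1"
    define P where "P k = T k - ln (D k)" for k
    define ss where "ss k = s k \<bullet> s k" for k
    have facts: "ln (ss k / (g k \<bullet> s k)^2) \<le> C2 + P k - P (Suc k)
        \<and> (g k \<bullet> s k)^2 / ss k \<le> (- (g k \<bullet> s k)) / (L * (1 - \<nu>)) \<and> ss k > 0" for k
    proof -
      define e where "e = 1 - (x k \<bullet> x (Suc k)) / (norm (x k) * norm (x (Suc k)))"
      note vi = vec_ids[OF xg(1)[of k] xg(1)[of "Suc k"], folded e_def]
      have gsv: "g k \<bullet> s k = a (Suc k) * (1 - e) - a k"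
        unfolding s_def xg(2)[of k] vi(1) a_def ..
      have ysv: "s k \<bullet> y k = (a k + a (Suc k)) * e"
        unfolding s_def y_def xg(2)[of k] xg(2)[of "Suc k"] vi(2) a_def ..
      have ssv: "ss k = (a k - a (Suc k))^2 + 2 * a k * a (Suc k) * e"
        unfolding ss_def s_def vi(3) a_def ..
      have yyv: "y k \<bullet> y k = 2 * e"
        unfolding y_def xg(2)[of k] xg(2)[of "Suc k"] vi(4) ..
      have wy: "s k \<bullet> y k \<ge> (1 - \<nu>) * (- (g k \<bullet> s k))"
      proof -
        have "s k \<bullet> y k = g (Suc k) \<bullet> s k - g k \<bullet> s k"
          unfolding y_def by (simp add: inner_diff_right inner_commute)
        then show ?thesis using wol[of k] by (simp add: algebra_simps)
      qed
      note sf = scalar_facts[where L=L and a="a k" and a'="a (Suc k)" and e=e and ?A0.0="a 0" and \<nu>=\<nu>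
          and gs="g k \<bullet> s k" and ys="s k \<bullet> y k" and ss="ss k" and yy="y k \<bullet> y k",
          OF Lp Lle[rule_format] adec a0 _ par(3) gsv gs_neg ysv wy ssv yyv]
      have nu0: "0 < \<nu>" using par by simp
      note sf = sf[OF nu0]
      have Mb: "M k \<le> 1 / L" using sf(2) unfolding M_def by simp
      have ps: "ln (ss k / (g k \<bullet> s k)^2) \<le> ln c1 + 1 / L - 1 + (T k - ln (D k)) - (T (Suc k) - ln (D (Suc k)))"
        by (rule potential_step[OF Tsuc Dsuc Dpos sg_pos sy_pos rgs _ _ sf(5) Mb])
          (use gs_neg[of k] sf(3) in \<open>auto simp: c1_def\<close>)
      show ?thesis using ps sf(4) sf(5) unfolding C2_def P_def
        by (simp add: divide_le_eq mult.commute)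
    qed
    define K where "K = real (card {p. p permutes (UNIV::'n set)})"
    define n where "n = CARD('n)"
    define C3 where "C3 = ln K + n * ln n - n"
    have n1: "n \<ge> 1" unfolding n_def by (simp add: Suc_le_eq)
    have Plow: "P k \<ge> - C3" for k
    proof -
      have "T k > 0" unfolding T_def by (rule pd_entries(3)[OF Bsym Bpd])
      moreover have "D k \<le> K * T k ^ n"
        unfolding D_def K_def T_def n_def by (rule det_bound[OF Bsym Bpd])
      ultimately show ?thesis unfolding P_def C3_def
        using potential_lower[OF _ Dpos _ n1] by blast
    qed
    have dlim: "(\<lambda>k. a k - a (Suc k)) \<longlonglongrightarrow> 0"
      using tendsto_diff[OF aL LIMSEQ_Suc[OF aL]] by simp
    define \<delta> where "\<delta> = L * (1 - \<nu>) * exp (- (C2 + 1))"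
    have dp: "\<delta> > 0" unfolding \<delta>_def using Lp par by simp
    have "\<forall>\<^sub>F k in sequentially. a k - a (Suc k) < \<mu> * \<delta>"
      using order_tendstoD(2)[OF dlim] dp par(1) by simp
    then obtain N where N: "\<And>k. k \<ge> N \<Longrightarrow> a k - a (Suc k) < \<mu> * \<delta>"
      unfolding eventually_sequentially by blast
    have Pdec: "P (Suc k) \<le> P k - 1" if k: "k \<ge> N" for k
    proof -
      have "\<mu> * (- (g k \<bullet> s k)) \<le> a k - a (Suc k)" using arm[of k] unfolding a_def by simp
      then have "\<mu> * (- (g k \<bullet> s k)) < \<mu> * \<delta>" using N[OF k] by linarith
      then have gd: "- (g k \<bullet> s k) < \<delta>" using par(1) mult_less_cancel_left_pos by blast
      note fk = facts[of k]
      have "(g k \<bullet> s k)^2 / ss k < exp (- (C2 + 1))"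
      proof -
        have "(- (g k \<bullet> s k)) / (L * (1 - \<nu>)) < \<delta> / (L * (1 - \<nu>))"
          by (rule divide_strict_right_mono[OF gd]) (use Lp par in simp)
        also have "\<dots> = exp (- (C2 + 1))" unfolding \<delta>_def using Lp par by simp
        finally show ?thesis using fk by linarith
      qed
      moreover have "(g k \<bullet> s k)^2 / ss k > 0" using fk gs_neg[of k] by simp
      ultimately have "ln ((g k \<bullet> s k)^2 / ss k) < - (C2 + 1)"
        by (metis ln_exp ln_less_cancel_iff exp_gt_zero)
      moreover have "ln (ss k / (g k \<bullet> s k)^2) = - ln ((g k \<bullet> s k)^2 / ss k)"
        using fk gs_neg[of k] by (simp add: ln_div)
      ultimately show ?thesis using fk by linarith
    qed
    have "P (N + m) \<le> P N - m" for m
    proof (induction m)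
      case 0 then show ?case by simp
    next
      case (Suc m)
      have "P (Suc (N + m)) \<le> P (N + m) - 1" by (rule Pdec) simp
      then show ?case using Suc by simp
    qed
    from this[of "nat \<lceil>P N + C3\<rceil> + 1"] Plow[of "N + (nat \<lceil>P N + C3\<rceil> + 1)"]
    show False by linarith
    qed
    then show ?thesis ..
  qed
qed


end
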